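(* Let $G$ be an $n$-dimensional Lie group with identity $e$ and Lie algebra $\mathfrak g=T_eG$, and let $\mathcal Y$ be a manifold (e.g. $\mathbb R^p$) with a smooth right action $(\rho_g)_{g\in G}$ of $G$ (so $\rho_{g_1}\circ\rho_{g_2}=\rho_{g_2g_1}$). Consider the system $\frac{d}{dt}x = DL_x\,\omega_s(t)$, $y=h(x)$, where $x\in G$, $t\mapsto\omega_s(t)\in\mathfrak g$ is a known input, and $h:G\to\mathcal Y$ is smooth and right equivariant: $h(xg)=\rho_g(h(x))$ for all $x,g\in G$. Fix a basis $W_1,\dots,W_n$ of $\mathfrak g$ and smooth scalar functions $\mathcal L_1,\dots,\mathcal L_n$ on $\mathcal Y$ with $\mathcal L_i(h(e))=0$, and consider the observer $$\frac{d}{dt}\hat x = DL_{\hat x}\,\omega_s(t) + DR_{\hat x}\Big(\sum_{i=1}^n\mathcal L_i\big(\rho_{\hat x^{-1}}(y)\big)W_i\Big).$$ Then the error $\eta=\hat x x^{-1}\in G$ satisfies the autonomous differential equation $$\frac{d}{dt}\eta = DR_\eta\Big(\sum_{i=1}^n\mathcal L_i\big(h(\eta^{-1})\big)W_i\Big),$$ which is independent of the trajectory $t\mapsto x(t)$ and of the input $\omega_s$.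
   Context: $L_g:x\mapsto gx$ and $R_g:x\mapsto xg$ are left and right multiplication on $G$; $DL_g$, $DR_g$ denote their differentials (maps between tangent spaces). *)

theory Defs
  imports "HOL-Analysis.Analysis"
begin

text \<open>Lie groups and manifolds are modelled as smooth embedded submanifolds of
Euclidean spaces (every manifold admits such an embedding, Whitney).\<close>

primrec dderiv :: "'a::real_normed_vector list \<Rightarrow> ('a \<Rightarrow> 'b::real_normed_vector) \<Rightarrow> 'a \<Rightarrow> 'b" where
  "dderiv [] f = f"
| "dderiv (v # vs) f = (\<lambda>x. frechet_derivative (dderiv vs f) (at x) v)"

definition smooth_on :: "'a::euclidean_space set \<Rightarrow> ('a \<Rightarrow> 'b::euclidean_space) \<Rightarrow> bool" where
  "smooth_on U f \<longleftrightarrow> open U \<and> (\<forall>vs. \<forall>x\<in>U. dderiv vs f differentiable (at x))"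

definition smooth_map :: "'a::euclidean_space set \<Rightarrow> ('a \<Rightarrow> 'b::euclidean_space) \<Rightarrow> bool" where
  "smooth_map M f \<longleftrightarrow> (\<forall>p\<in>M. \<exists>U F. open U \<and> p \<in> U \<and> smooth_on U F \<and> (\<forall>x\<in>U \<inter> M. F x = f x))"

definition submanifold :: "nat \<Rightarrow> 'a::euclidean_space set \<Rightarrow> bool" where
  "submanifold d M \<longleftrightarrow> (\<forall>p\<in>M. \<exists>(S::'a set) U (V::'a set) \<phi> \<psi>.
      subspace S \<and> dim S = d \<and> open U \<and> p \<in> U \<and> open V \<and> smooth_on V \<phi> \<and>
      homeomorphism (S \<inter> V) (M \<inter> U) \<phi> \<psi> \<and>
      (\<forall>x\<in>S \<inter> V. inj_on (frechet_derivative \<phi> (at x)) S))"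

definition is_manifold :: "'a::euclidean_space set \<Rightarrow> bool" where
  "is_manifold M \<longleftrightarrow> (\<exists>d. submanifold d M)"

definition curve_through :: "'a::euclidean_space set \<Rightarrow> 'a \<Rightarrow> 'a \<Rightarrow> (real \<Rightarrow> 'a) \<Rightarrow> bool" where
  "curve_through M p v \<gamma> \<longleftrightarrow> (\<exists>\<epsilon>>0. \<forall>s. \<bar>s\<bar> < \<epsilon> \<longrightarrow> \<gamma> s \<in> M) \<and> \<gamma> 0 = p \<and>
      (\<gamma> has_vector_derivative v) (at 0)"

definition tangent_space :: "'a::euclidean_space set \<Rightarrow> 'a \<Rightarrow> 'a set" where
  "tangent_space M p = {v. \<exists>\<gamma>. curve_through M p v \<gamma>}"

definition diff :: "'a::euclidean_space set \<Rightarrow> ('a \<Rightarrow> 'b::euclidean_space) \<Rightarrow> 'a \<Rightarrow> 'a \<Rightarrow> 'b" where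
  "diff M f p v = (THE w. \<forall>\<gamma>. curve_through M p v \<gamma> \<longrightarrow> ((f \<circ> \<gamma>) has_vector_derivative w) (at 0))"

definition lie_group :: "nat \<Rightarrow> 'a::euclidean_space set \<Rightarrow> ('a \<Rightarrow> 'a \<Rightarrow> 'a) \<Rightarrow> ('a \<Rightarrow> 'a) \<Rightarrow> 'a \<Rightarrow> bool" where
  "lie_group d G mul gi e \<longleftrightarrow>
     e \<in> G \<and> (\<forall>a\<in>G. \<forall>b\<in>G. mul a b \<in> G) \<and> (\<forall>a\<in>G. gi a \<in> G) \<and>
     (\<forall>a\<in>G. \<forall>b\<in>G. \<forall>c\<in>G. mul (mul a b) c = mul a (mul b c)) \<and>
     (\<forall>a\<in>G. mul e a = a \<and> mul a e = a) \<and>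
     (\<forall>a\<in>G. mul (gi a) a = e \<and> mul a (gi a) = e) \<and>
     submanifold d G \<and> smooth_map (G \<times> G) (\<lambda>(a, b). mul a b) \<and> smooth_map G gi"

definition smooth_right_action :: "'a::euclidean_space set \<Rightarrow> ('a \<Rightarrow> 'a \<Rightarrow> 'a) \<Rightarrow> 'a \<Rightarrow>
    'b::euclidean_space set \<Rightarrow> ('a \<Rightarrow> 'b \<Rightarrow> 'b) \<Rightarrow> bool" where
  "smooth_right_action G mul e Y \<rho> \<longleftrightarrow>
     (\<forall>g\<in>G. \<forall>y\<in>Y. \<rho> g y \<in> Y) \<and> (\<forall>y\<in>Y. \<rho> e y = y) \<and>
     (\<forall>g1\<in>G. \<forall>g2\<in>G. \<forall>y\<in>Y. \<rho> g1 (\<rho> g2 y) = \<rho> (mul g2 g1) y) \<and>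
     smooth_map (G \<times> Y) (\<lambda>(g, y). \<rho> g y)"

end

theory Submission
  imports Defs
begin

lemma vd_pair:
  assumes "(f has_vector_derivative f') (at s)" "(g has_vector_derivative g') (at s)"
  shows "((\<lambda>x. (f x, g x)) has_vector_derivative (f', g')) (at s)"
  using has_derivative_Pair[OF assms[unfolded has_vector_derivative_def]]
  by (simp add: has_vector_derivative_def)

lemma chain_loc:
  assumes "open U" "p \<in> U" "\<forall>z\<in>U\<inter>M. F z = f z" "(F has_derivative F') (at p)"
    "(c has_vector_derivative v) (at s0)" "c s0 = p" "eventually (\<lambda>s. c s \<in> M) (nhds s0)"
  shows "((\<lambda>s. f (c s)) has_vector_derivative F' v) (at s0)"
proof -
  have cc: "continuous (at s0) c"
    using assms(5) has_vector_derivative_continuous by blast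
  have "eventually (\<lambda>s. c s \<in> U) (nhds s0)"
  proof -
    have "(c \<longlongrightarrow> p) (at s0)" using cc assms(6) by (simp add: isCont_def)
    then have "eventually (\<lambda>s. c s \<in> U) (at s0)" using assms(1,2) tendsto_def by blast
    then show ?thesis using assms(2,6) eventually_nhds_conv_at by auto
  qed
  then have ev: "eventually (\<lambda>s. F (c s) = f (c s)) (nhds s0)"
    using assms(7) assms(3) by (auto elim: eventually_mono[OF eventually_conj])
  have d: "((\<lambda>s. F (c s)) has_vector_derivative F' v) (at s0)"
    using vector_derivative_diff_chain_within[of c v s0 UNIV F F'] assms(4,5,6)
    by (simp add: o_def has_derivative_at_withinI)
  show ?thesis
    using has_vector_derivative_cong_ev[where x=s0 and S=UNIV and f="\<lambda>s. F (c s)" and g="\<lambda>s. f (c s)" and f'="F' v"] ev d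
    by (simp add: eventually_mono eventually_nhds_x_imp_x[OF ev])
qed

lemma curve_ev:
  assumes "curve_through M p v \<gamma>"
  shows "eventually (\<lambda>s. \<gamma> s \<in> M) (nhds 0)" "\<gamma> 0 = p" "(\<gamma> has_vector_derivative v) (at 0)"
proof -
  from assms obtain \<epsilon> where "\<epsilon> > 0" "\<forall>s. \<bar>s\<bar> < \<epsilon> \<longrightarrow> \<gamma> s \<in> M"
    unfolding curve_through_def by blast
  then show "eventually (\<lambda>s. \<gamma> s \<in> M) (nhds 0)"
    unfolding eventually_nhds_metric by (auto simp: dist_real_def)
  show "\<gamma> 0 = p" "(\<gamma> has_vector_derivative v) (at 0)" using assms unfolding curve_through_def by auto
qed

lemma diff_char:
  assumes "v \<in> tangent_space M p" "\<forall>\<gamma>. curve_through M p v \<gamma> \<longrightarrow> ((f \<circ> \<gamma>) has_vector_derivative w) (at 0)"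
  shows "diff M f p v = w"
  unfolding diff_def
proof (rule the_equality)
  show "\<forall>\<gamma>. curve_through M p v \<gamma> \<longrightarrow> ((f \<circ> \<gamma>) has_vector_derivative w) (at 0)" by fact
  fix w' assume h: "\<forall>\<gamma>. curve_through M p v \<gamma> \<longrightarrow> ((f \<circ> \<gamma>) has_vector_derivative w') (at 0)"
  from assms(1) obtain \<gamma> where "curve_through M p v \<gamma>" unfolding tangent_space_def by auto
  then show "w' = w" using h assms(2) vector_derivative_unique_at by blast
qed

lemma diff_curve:
  assumes "open U" "p \<in> U" "\<forall>z\<in>U\<inter>M. F z = f z" "F differentiable (at p)" "curve_through M p v \<gamma>"
  shows "((\<lambda>s. f (\<gamma> s)) has_vector_derivative diff M f p v) (at 0)"
proof -
  have FD: "(F has_derivative frechet_derivative F (at p)) (at p)"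
    using assms(4) frechet_derivative_works by blast
  have all: "\<forall>\<gamma>. curve_through M p v \<gamma> \<longrightarrow> ((f \<circ> \<gamma>) has_vector_derivative frechet_derivative F (at p) v) (at 0)"
  proof (intro allI impI)
    fix \<gamma> assume c: "curve_through M p v \<gamma>"
    show "((f \<circ> \<gamma>) has_vector_derivative frechet_derivative F (at p) v) (at 0)"
      using chain_loc[OF assms(1,2,3) FD curve_ev(3)[OF c] curve_ev(2)[OF c] curve_ev(1)[OF c]]
      by (simp add: o_def)
  qed
  have "v \<in> tangent_space M p" using assms(5) unfolding tangent_space_def by auto
  then have "diff M f p v = frechet_derivative F (at p) v" using diff_char all by blast
  then show ?thesis using all assms(5) by (simp add: o_def)
qed

lemma smooth_ext:
  assumes "smooth_map M f" "p \<in> M"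
  shows "\<exists>U F. open U \<and> p \<in> U \<and> (\<forall>z\<in>U\<inter>M. F z = f z) \<and> F differentiable (at p)"
proof -
  obtain U F where "open U" "p \<in> U" "smooth_on U F" "\<forall>x\<in>U \<inter> M. F x = f x"
    using assms unfolding smooth_map_def by blast
  moreover have "F differentiable (at p)"
    using \<open>smooth_on U F\<close> \<open>p \<in> U\<close> unfolding smooth_on_def
    by (metis dderiv.simps(1))
  ultimately show ?thesis by blast
qed

lemma ext_left:
  assumes "open U" "(a, b) \<in> U" "\<forall>z\<in>U \<inter> (G \<times> G). F z = (\<lambda>(x, y). mul x y) z" "F differentiable (at (a, b))" "a \<in> G"
  shows "\<exists>U F. open U \<and> b \<in> U \<and> (\<forall>z\<in>U\<inter>G. F z = mul a z) \<and> F differentiable (at b)"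
proof (intro exI conjI)
  show "open ((\<lambda>z. (a, z)) -` U)" using assms(1) by (intro open_vimage) (auto intro: continuous_intros)
  show "b \<in> (\<lambda>z. (a, z)) -` U" using assms(2) by simp
  show "\<forall>z\<in>(\<lambda>z. (a, z)) -` U \<inter> G. F (a, z) = mul a z" using assms(3,5) by auto
  show "(\<lambda>z. F (a, z)) differentiable (at b)"
    using differentiable_chain_at[of "\<lambda>z. (a, z)" b F] assms(4)
    by (simp add: o_def)
qed

lemma ext_right:
  assumes "open U" "(a, b) \<in> U" "\<forall>z\<in>U \<inter> (G \<times> G). F z = (\<lambda>(x, y). mul x y) z" "F differentiable (at (a, b))" "b \<in> G"
  shows "\<exists>U F. open U \<and> a \<in> U \<and> (\<forall>z\<in>U\<inter>G. F z = mul z b) \<and> F differentiable (at a)"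
proof (intro exI conjI)
  show "open ((\<lambda>z. (z, b)) -` U)" using assms(1) by (intro open_vimage) (auto intro: continuous_intros)
  show "a \<in> (\<lambda>z. (z, b)) -` U" using assms(2) by simp
  show "\<forall>z\<in>(\<lambda>z. (z, b)) -` U \<inter> G. F (z, b) = mul z b" using assms(3,5) by auto
  show "(\<lambda>z. F (z, b)) differentiable (at a)"
    using differentiable_chain_at[of "\<lambda>z. (z, b)" a F] assms(4)
    by (simp add: o_def)
qed

lemma group_inv_mul:
  assumes "lie_group d G mul gi e" "a \<in> G" "b \<in> G"
  shows "gi (mul a b) = mul (gi b) (gi a)"
proof -
  note L = assms(1)[unfolded lie_group_def]
  have ab: "mul a b \<in> G" using L assms by blast
  have "mul (mul (gi b) (gi a)) (mul a b) = e"
    using L assms by (metis)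
  then have "mul (mul (mul (gi b) (gi a)) (mul a b)) (gi (mul a b)) = gi (mul a b)"
    using L ab by metis
  then show ?thesis using L ab assms by metis
qed

theorem mainTheorem2:
  fixes G :: "'a::euclidean_space set" and mul :: "'a \<Rightarrow> 'a \<Rightarrow> 'a"
    and gi :: "'a \<Rightarrow> 'a" and e :: 'a
    and Y :: "'b::euclidean_space set" and \<rho> :: "'a \<Rightarrow> 'b \<Rightarrow> 'b"
    and h :: "'a \<Rightarrow> 'b"
    and W :: "'n::finite \<Rightarrow> 'a" and L :: "'n \<Rightarrow> 'b \<Rightarrow> real"
    and \<omega> :: "real \<Rightarrow> 'a" and x xh :: "real \<Rightarrow> 'a" and I :: "real set"
  defines "DL \<equiv> \<lambda>g v. diff G (mul g) e v"
    and "DR \<equiv> \<lambda>g v. diff G (\<lambda>z. mul z g) e v"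
  assumes LG: "lie_group CARD('n) G mul gi e"
    and Ym: "is_manifold Y"
    and act: "smooth_right_action G mul e Y \<rho>"
    and h_smooth: "smooth_map G h" and h_into: "\<forall>a\<in>G. h a \<in> Y"
    and h_equiv: "\<forall>a\<in>G. \<forall>g\<in>G. h (mul a g) = \<rho> g (h a)"
    and W_basis: "inj W" "independent (range W)" "span (range W) = tangent_space G e"
    and L_smooth: "\<forall>i. smooth_map Y (L i)"
    and L_zero: "\<forall>i. L i (h e) = 0"
    and I_open: "open I"
    and \<omega>_in: "\<forall>t\<in>I. \<omega> t \<in> tangent_space G e"
    and x_in: "\<forall>t\<in>I. x t \<in> G"
    and x_ode: "\<forall>t\<in>I. (x has_vector_derivative DL (x t) (\<omega> t)) (at t)"
    and xh_in: "\<forall>t\<in>I. xh t \<in> G"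
    and xh_ode: "\<forall>t\<in>I. (xh has_vector_derivative
          (DL (xh t) (\<omega> t) + DR (xh t) (\<Sum>i\<in>UNIV. L i (\<rho> (gi (xh t)) (h (x t))) *\<^sub>R W i))) (at t)"
  shows "\<forall>t\<in>I. ((\<lambda>s. mul (xh s) (gi (x s))) has_vector_derivative
          DR (mul (xh t) (gi (x t)))
             (\<Sum>i\<in>UNIV. L i (h (gi (mul (xh t) (gi (x t))))) *\<^sub>R W i)) (at t)"
proof
  fix t assume tI: "t \<in> I"
  note L0 = LG[unfolded lie_group_def]
  have eG: "e \<in> G" using L0 by blast
  have mulG: "\<And>p q. p \<in> G \<Longrightarrow> q \<in> G \<Longrightarrow> mul p q \<in> G" using L0 by blast
  have giG: "\<And>p. p \<in> G \<Longrightarrow> gi p \<in> G" using L0 by blast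
  have assoc: "\<And>p q r. p \<in> G \<Longrightarrow> q \<in> G \<Longrightarrow> r \<in> G \<Longrightarrow> mul (mul p q) r = mul p (mul q r)" using L0 by blast
  have idl: "\<And>p. p \<in> G \<Longrightarrow> mul e p = p" and idr: "\<And>p. p \<in> G \<Longrightarrow> mul p e = p" using L0 by blast+
  have invl: "\<And>p. p \<in> G \<Longrightarrow> mul (gi p) p = e" and invr: "\<And>p. p \<in> G \<Longrightarrow> mul p (gi p) = e" using L0 by blast+
  note L = eG mulG giG
  have mulS: "smooth_map (G \<times> G) (\<lambda>(a, b). mul a b)" and giS: "smooth_map G gi" using L0 by blast+
  define a where "a = xh t"
  define b where "b = x t"
  define gb where "gb = gi b"
  define \<eta>0 where "\<eta>0 = mul a gb"
  define w where "w = \<omega> t"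
  define S where "S = (\<Sum>i\<in>UNIV. L i (h (gi \<eta>0)) *\<^sub>R W i)"
  define S1 where "S1 = (\<Sum>i\<in>UNIV. L i (\<rho> (gi a) (h b)) *\<^sub>R W i)"
  have aG: "a \<in> G" and bG: "b \<in> G" using tI xh_in x_in a_def b_def by auto
  have gbG: "gb \<in> G" using L bG gb_def by auto
  have \<eta>G: "\<eta>0 \<in> G" using L aG gbG \<eta>0_def by auto
  have giaG: "gi a \<in> G" using L aG by auto
  have gigb: "gi gb = b"
  proof -
    have "gi gb = mul (gi gb) (mul gb b)" using invl[OF bG] idr giG gbG gb_def by simp
    also have "\<dots> = b" using assoc[symmetric, OF giG[OF gbG] gbG bG] invl[OF gbG] idl[OF bG] by simp
    finally show ?thesis .
  qed
  have "gi \<eta>0 = mul b (gi a)" using group_inv_mul[OF LG aG gbG] gigb \<eta>0_def by simp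
  then have "h (gi \<eta>0) = \<rho> (gi a) (h b)" using h_equiv bG giaG by simp
  then have S1S: "S1 = S" unfolding S_def S1_def by simp
  have "S \<in> span (range W)" unfolding S_def
    by (intro span_sum span_scale span_base) auto
  then have ST: "S \<in> tangent_space G e" using W_basis(3) by simp
  have wT: "w \<in> tangent_space G e" using \<omega>_in tI w_def by simp
  obtain \<gamma>w where cw: "curve_through G e w \<gamma>w" using wT unfolding tangent_space_def by auto
  obtain \<gamma>S where cS: "curve_through G e S \<gamma>S" using ST unfolding tangent_space_def by auto
  have DLc: "((\<lambda>s. mul g (\<gamma> s)) has_vector_derivative diff G (mul g) e v) (at 0)"
    if "g \<in> G" "curve_through G e v \<gamma>" for g v \<gamma>
  proof -
    have "(g, e) \<in> G \<times> G" using that L by auto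
    then obtain U F where UF: "open U" "(g, e) \<in> U" "\<forall>z\<in>U\<inter>(G\<times>G). F z = (\<lambda>(a, b). mul a b) z" "F differentiable (at (g, e))"
      using smooth_ext[OF mulS] by blast
    then obtain U' F' where UF': "open U'" "e \<in> U'" "\<forall>z\<in>U'\<inter>G. F' z = mul g z" "F' differentiable (at e)"
      using ext_left[OF UF \<open>g \<in> G\<close>] by blast
    show ?thesis using diff_curve[OF UF' \<open>curve_through G e v \<gamma>\<close>] .
  qed
  have DRc: "((\<lambda>s. mul (\<gamma> s) g) has_vector_derivative diff G (\<lambda>z. mul z g) e v) (at 0)"
    if "g \<in> G" "curve_through G e v \<gamma>" for g v \<gamma>
  proof -
    have "(e, g) \<in> G \<times> G" using that L by auto
    then obtain U F where UF: "open U" "(e, g) \<in> U" "\<forall>z\<in>U\<inter>(G\<times>G). F z = (\<lambda>(a, b). mul a b) z" "F differentiable (at (e, g))"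
      using smooth_ext[OF mulS] by blast
    then obtain U' F' where UF': "open U'" "e \<in> U'" "\<forall>z\<in>U'\<inter>G. F' z = mul z g" "F' differentiable (at e)"
      using ext_right[OF UF \<open>g \<in> G\<close>] by blast
    show ?thesis using diff_curve[OF UF' \<open>curve_through G e v \<gamma>\<close>] .
  qed
  have "(a, gb) \<in> G \<times> G" using aG gbG by auto
  then obtain Um Fm where Um: "open Um" "(a, gb) \<in> Um" "\<forall>z\<in>Um\<inter>(G\<times>G). Fm z = (\<lambda>(a, b). mul a b) z"
      and Fmd: "Fm differentiable (at (a, gb))"
    using smooth_ext[OF mulS] by blast
  define Fm' where "Fm' = frechet_derivative Fm (at (a, gb))"
  have FmD: "(Fm has_derivative Fm') (at (a, gb))" using Fmd frechet_derivative_works Fm'_def by blast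
  have linFm: "linear Fm'" using FmD has_derivative_linear by blast
  obtain Ug Gi where Ug: "open Ug" "b \<in> Ug" "\<forall>z\<in>Ug\<inter>G. Gi z = gi z" and Gid: "Gi differentiable (at b)"
    using smooth_ext[OF giS bG] by blast
  define Gi' where "Gi' = frechet_derivative Gi (at b)"
  have GiD: "(Gi has_derivative Gi') (at b)" using Gid frechet_derivative_works Gi'_def by blast
  have evI: "eventually (\<lambda>s. s \<in> I) (nhds t)" using I_open tI eventually_nhds_in_open by blast
  have evx: "eventually (\<lambda>s. x s \<in> G) (nhds t)" using evI x_in by (auto elim: eventually_mono)
  have evxh: "eventually (\<lambda>s. xh s \<in> G) (nhds t)" using evI xh_in by (auto elim: eventually_mono)
  have xD: "(x has_vector_derivative diff G (mul b) e w) (at t)"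
    using x_ode tI unfolding DL_def b_def w_def by simp
  have gxD: "((\<lambda>s. gi (x s)) has_vector_derivative Gi' (diff G (mul b) e w)) (at t)"
    using chain_loc[OF Ug GiD xD _ evx] b_def by simp
  have xhD: "(xh has_vector_derivative diff G (mul a) e w + diff G (\<lambda>z. mul z a) e S) (at t)"
  proof -
    have "(xh has_vector_derivative DL (xh t) (\<omega> t) + DR (xh t) S1) (at t)"
      using xh_ode tI unfolding S1_def a_def b_def by blast
    then show ?thesis unfolding DL_def DR_def a_def w_def S1S by simp
  qed
  have ev2: "eventually (\<lambda>s. (xh s, gi (x s)) \<in> G \<times> G) (nhds t)"
    using evx evxh L by (auto elim: eventually_mono[OF eventually_conj])
  have etaD: "((\<lambda>s. mul (xh s) (gi (x s))) has_vector_derivative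
      Fm' (diff G (mul a) e w + diff G (\<lambda>z. mul z a) e S, Gi' (diff G (mul b) e w))) (at t)"
    using chain_loc[OF Um FmD vd_pair[OF xhD gxD] _ ev2] a_def b_def gb_def by simp
  have evw: "eventually (\<lambda>s. \<gamma>w s \<in> G) (nhds 0)" using curve_ev(1)[OF cw] .
  have w0: "\<gamma>w 0 = e" using curve_ev(2)[OF cw] .
  have caD: "((\<lambda>s. mul a (\<gamma>w s)) has_vector_derivative diff G (mul a) e w) (at 0)" using DLc aG cw by blast
  have cbD: "((\<lambda>s. mul b (\<gamma>w s)) has_vector_derivative diff G (mul b) e w) (at 0)" using DLc bG cw by blast
  have evcb: "eventually (\<lambda>s. mul b (\<gamma>w s) \<in> G) (nhds 0)" using evw L bG by (auto elim: eventually_mono)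
  have cb0: "mul b (\<gamma>w 0) = b" using w0 idr bG by simp
  have gcbD: "((\<lambda>s. gi (mul b (\<gamma>w s))) has_vector_derivative Gi' (diff G (mul b) e w)) (at 0)"
    using chain_loc[OF Ug GiD cbD cb0 evcb] by simp
  have evc: "eventually (\<lambda>s. (mul a (\<gamma>w s), gi (mul b (\<gamma>w s))) \<in> G \<times> G) (nhds 0)"
    using evw L aG bG by (auto elim: eventually_mono)
  have c0: "(mul a (\<gamma>w 0), gi (mul b (\<gamma>w 0))) = (a, gb)" using w0 idr aG bG gb_def by simp
  have cD: "((\<lambda>s. mul (mul a (\<gamma>w s)) (gi (mul b (\<gamma>w s)))) has_vector_derivative
       Fm' (diff G (mul a) e w, Gi' (diff G (mul b) e w))) (at 0)"
    using chain_loc[OF Um FmD vd_pair[OF caD gcbD] c0 evc] by simp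
  have const: "eventually (\<lambda>s. mul (mul a (\<gamma>w s)) (gi (mul b (\<gamma>w s))) = \<eta>0) (nhds 0)"
  proof (rule eventually_mono[OF evw])
    fix s assume g: "\<gamma>w s \<in> G"
    have "gi (mul b (\<gamma>w s)) = mul (gi (\<gamma>w s)) gb" using group_inv_mul[OF LG bG g] gb_def by simp
    moreover have "gi (\<gamma>w s) \<in> G" using L g by auto
    ultimately show "mul (mul a (\<gamma>w s)) (gi (mul b (\<gamma>w s))) = \<eta>0"
      using assoc[OF aG g mulG[OF giG[OF g] gbG]] assoc[symmetric, OF g giG[OF g] gbG] invr[OF g] idl[OF gbG] \<eta>0_def
      by simp
  qed
  have "((\<lambda>s. mul (mul a (\<gamma>w s)) (gi (mul b (\<gamma>w s)))) has_vector_derivative 0) (at 0)"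
    using has_vector_derivative_cong_ev[where x=0 and S=UNIV and f="\<lambda>s. mul (mul a (\<gamma>w s)) (gi (mul b (\<gamma>w s)))" and g="\<lambda>s. \<eta>0" and f'=0]
      const eventually_nhds_x_imp_x[OF const] has_vector_derivative_const by auto
  then have A: "Fm' (diff G (mul a) e w, Gi' (diff G (mul b) e w)) = 0"
    using cD vector_derivative_unique_at by blast
  have evS: "eventually (\<lambda>s. \<gamma>S s \<in> G) (nhds 0)" using curve_ev(1)[OF cS] .
  have S0: "\<gamma>S 0 = e" using curve_ev(2)[OF cS] .
  have ca2D: "((\<lambda>s. mul (\<gamma>S s) a) has_vector_derivative diff G (\<lambda>z. mul z a) e S) (at 0)" using DRc aG cS by blast
  have evc2: "eventually (\<lambda>s. (mul (\<gamma>S s) a, gb) \<in> G \<times> G) (nhds 0)"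
    using evS L aG gbG by (auto elim: eventually_mono)
  have c20: "(mul (\<gamma>S 0) a, gb) = (a, gb)" using S0 idl aG by simp
  have c2D: "((\<lambda>s. mul (mul (\<gamma>S s) a) gb) has_vector_derivative Fm' (diff G (\<lambda>z. mul z a) e S, 0)) (at 0)"
    using chain_loc[OF Um FmD vd_pair[OF ca2D has_vector_derivative_const] c20 evc2] by simp
  have ev3: "eventually (\<lambda>s. mul (mul (\<gamma>S s) a) gb = mul (\<gamma>S s) \<eta>0) (nhds 0)"
    using evS assoc aG gbG \<eta>0_def by (auto elim: eventually_mono)
  have "((\<lambda>s. mul (mul (\<gamma>S s) a) gb) has_vector_derivative diff G (\<lambda>z. mul z \<eta>0) e S) (at 0)"
    using has_vector_derivative_cong_ev[where x=0 and S=UNIV and f="\<lambda>s. mul (mul (\<gamma>S s) a) gb" and g="\<lambda>s. mul (\<gamma>S s) \<eta>0" and f'="diff G (\<lambda>z. mul z \<eta>0) e S"]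
      ev3 eventually_nhds_x_imp_x[OF ev3] DRc[OF \<eta>G cS] by auto
  then have B: "Fm' (diff G (\<lambda>z. mul z a) e S, 0) = diff G (\<lambda>z. mul z \<eta>0) e S"
    using c2D vector_derivative_unique_at by blast
  have "Fm' (diff G (mul a) e w + diff G (\<lambda>z. mul z a) e S, Gi' (diff G (mul b) e w))
      = Fm' ((diff G (mul a) e w, Gi' (diff G (mul b) e w)) + (diff G (\<lambda>z. mul z a) e S, 0))"
    by simp
  also have "\<dots> = Fm' (diff G (mul a) e w, Gi' (diff G (mul b) e w)) + Fm' (diff G (\<lambda>z. mul z a) e S, 0)"
    by (rule linear_add[OF linFm])
  also have "\<dots> = diff G (\<lambda>z. mul z \<eta>0) e S" using A B by simp
  finally show "((\<lambda>s. mul (xh s) (gi (x s))) has_vector_derivative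
          DR (mul (xh t) (gi (x t)))
             (\<Sum>i\<in>UNIV. L i (h (gi (mul (xh t) (gi (x t))))) *\<^sub>R W i)) (at t)"
    using etaD unfolding DR_def S_def \<eta>0_def a_def b_def gb_def by simp
qed

end
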